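(* Let $i,j,n,r\ge0$ be integers and put $$R_1(\varepsilon)=\frac{(rn)!}{n!^r}\binom{rn+i+\varepsilon}{(r-1)n+j},$$ $$R_2(\varepsilon)=\frac{(rn)!}{n!^r}\frac{(1-\varepsilon)_{rn}}{(rn)!}\frac{(rn+j+1)!}{(1-\varepsilon)_{rn+j+1}}\binom{rn-\varepsilon+j-i}{j-i}\binom{(r+1)n-\varepsilon+1}{rn+i+1}.$$ Then for every integer $H\ge0$: if $0\le i,j\le n$, the number $d_n^H\frac1{H!}\frac{\partial^H}{\partial\varepsilon^H}R_1(\varepsilon)\big|_{\varepsilon=0}$ is an integer; and if $0\le i\le j\le n$, the number $d_n^H\frac1{H!}\frac{\partial^H}{\partial\varepsilon^H}R_2(\varepsilon)\big|_{\varepsilon=0}$ is an integer.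
   Context: $(x)_m=x(x+1)\cdots(x+m-1)$, $(x)_0=1$; for complex $x$ and integer $m$, $\binom xm=x(x-1)\cdots(x-m+1)/m!$ if $m\ge0$ and $\binom xm=0$ if $m<0$. $d_n=\operatorname{lcm}(1,\dots,n)$, $d_0=1$. *)

theory Defs
  imports "HOL-Analysis.Analysis"
begin

definition ibinom :: "real \<Rightarrow> int \<Rightarrow> real" where
  "ibinom x m = (if m < 0 then 0 else x gchoose (nat m))"

text \<open>d_n = lcm(1,...,n), d_0 = 1.\<close>
definition dlcm :: "nat \<Rightarrow> nat" where
  "dlcm n = Lcm {1..n}"

definition R1 :: "nat \<Rightarrow> nat \<Rightarrow> nat \<Rightarrow> nat \<Rightarrow> real \<Rightarrow> real" where
  "R1 i j n r \<epsilon> =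
     fact (r*n) / (fact n) ^ r
     * ibinom (real (r*n + i) + \<epsilon>) ((int r - 1) * int n + int j)"

definition R2 :: "nat \<Rightarrow> nat \<Rightarrow> nat \<Rightarrow> nat \<Rightarrow> real \<Rightarrow> real" where
  "R2 i j n r \<epsilon> =
     fact (r*n) / (fact n) ^ r
     * (pochhammer (1 - \<epsilon>) (r*n) / fact (r*n))
     * (fact (r*n + j + 1) / pochhammer (1 - \<epsilon>) (r*n + j + 1))
     * ibinom (real (r*n) - \<epsilon> + real_of_int (int j - int i)) (int j - int i)
     * ibinom (real ((r+1)*n) - \<epsilon> + 1) (int (r*n + i + 1))"

end

theory Submission
  imports Defs
begin

unbundle no vec_syntax
notation fps_nth (infixl \<open>$\<close> 75)



lemma fps_nth_conv_deriv_real: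
  fixes f :: "real fps"
  assumes "fps_conv_radius f > 0"
  shows   "fps_nth f n = (deriv ^^ n) (eval_fps f) 0 / fact n"
  using assms
proof (induction n arbitrary: f)
  case 0
  thus ?case by (simp add: eval_fps_def)
next
  case (Suc n f)
  have "(deriv ^^ Suc n) (eval_fps f) 0 = (deriv ^^ n) (deriv (eval_fps f)) 0"
    unfolding funpow_Suc_right o_def ..
  also have "eventually (\<lambda>z::real. z \<in> eball 0 (fps_conv_radius f)) (nhds 0)"
    using Suc.prems by (intro eventually_nhds_in_open) (auto simp: zero_ereal_def)
  hence "eventually (\<lambda>z. deriv (eval_fps f) z = eval_fps (fps_deriv f) z) (nhds 0)"
    by eventually_elim (simp add: eval_fps_deriv)
  hence "(deriv ^^ n) (deriv (eval_fps f)) 0 = (deriv ^^ n) (eval_fps (fps_deriv f)) 0"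
    by (intro higher_deriv_cong_ev refl)
  also have "\<dots> / fact n = fps_nth (fps_deriv f) n"
    using Suc.prems fps_conv_radius_deriv[of f] 
    by (intro Suc.IH [symmetric]) auto
  also have "\<dots> / of_nat (Suc n) = fps_nth f (Suc n)"
    by (simp add: fps_deriv_def del: of_nat_Suc)
  finally show ?case by (simp add: field_split_simps)
qed

lemma fps_nth_fps_expansion_real:
  fixes f :: "real \<Rightarrow> real"
  assumes "f has_fps_expansion F"
  shows   "(deriv ^^ n) f 0 / fact n = fps_nth F n"
proof -
  have "fps_nth F n = (deriv ^^ n) (eval_fps F) 0 / fact n"
    using assms by (intro fps_nth_conv_deriv_real) (auto simp: has_fps_expansion_def)
  also have "(deriv ^^ n) (eval_fps F) 0 = (deriv ^^ n) f 0"
    using assms by (intro higher_deriv_cong_ev) (auto simp: has_fps_expansion_def)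
  finally show ?thesis by simp
qed

lemma has_fps_expansion_cong_ev:
  assumes "f has_fps_expansion F" "eventually (\<lambda>x. f x = g x) (nhds 0)"
  shows "g has_fps_expansion F"
  using assms unfolding has_fps_expansion_def
  by (auto elim: eventually_elim2)




definition locint :: "nat \<Rightarrow> real \<Rightarrow> bool" where
  "locint p x \<longleftrightarrow> (\<exists>u::int. \<not> int p dvd u \<and> of_int u * x \<in> \<int>)"

lemma locint_Ints: "prime p \<Longrightarrow> x \<in> \<int> \<Longrightarrow> locint p x"
  unfolding locint_def
  by (rule exI[of _ 1]) (auto simp: prime_gt_1_nat)

lemma locint_mult:
  assumes "prime p" "locint p x" "locint p y" shows "locint p (x * y)"
proof -
  from assms obtain u v :: int where uv: "\<not> int p dvd u" "of_int u * x \<in> \<int>" "\<not> int p dvd v" "of_int v * y \<in> \<int>"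
    unfolding locint_def by blast
  have "\<not> int p dvd u * v" using uv assms(1)
    by (simp add: prime_dvd_mult_iff prime_nat_iff_prime)
  moreover have "of_int (u * v) * (x * y) = (of_int u * x) * (of_int v * y)" by simp
  hence "of_int (u * v) * (x * y) \<in> \<int>" using uv by (metis Ints_mult)
  ultimately show ?thesis unfolding locint_def by blast
qed

lemma locint_add:
  assumes "prime p" "locint p x" "locint p y" shows "locint p (x + y)"
proof -
  from assms obtain u v :: int where uv: "\<not> int p dvd u" "of_int u * x \<in> \<int>" "\<not> int p dvd v" "of_int v * y \<in> \<int>"
    unfolding locint_def by blast
  have "\<not> int p dvd u * v" using uv assms(1)
    by (simp add: prime_dvd_mult_iff prime_nat_iff_prime)
  moreover have "of_int (u * v) * (x + y) = of_int v * (of_int u * x) + of_int u * (of_int v * y)"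
    by (simp add: algebra_simps)
  hence "of_int (u * v) * (x + y) \<in> \<int>" using uv by simp
  ultimately show ?thesis unfolding locint_def by blast
qed

lemma locint_sum:
  assumes "prime p" "\<And>k. k \<in> A \<Longrightarrow> locint p (f k)" shows "locint p (\<Sum>k\<in>A. f k)"
  using assms(2)
proof (induction A rule: infinite_finite_induct)
  case (infinite A) thus ?case using locint_Ints[OF assms(1)] by simp
next
  case empty thus ?case using locint_Ints[OF assms(1)] by simp
next
  case (insert x F) thus ?case using locint_add[OF assms(1)] by simp
qed

lemma locint_glue:
  fixes x :: real
  assumes "\<And>p. prime p \<Longrightarrow> locint p x"
  shows "x \<in> \<int>"
proof -
  define I where "I = {u::int. u > 0 \<and> of_int u * x \<in> \<int>}"
  obtain u0 :: int where u0: "\<not> 2 dvd u0" "of_int u0 * x \<in> \<int>"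
    using assms[of 2] unfolding locint_def by auto
  have u0n: "u0 \<noteq> 0" using u0 by auto
  have "\<bar>u0\<bar> \<in> I" unfolding I_def using u0 u0n
  proof -
    have "of_int \<bar>u0\<bar> * x = (if u0 \<ge> 0 then 1 else -1) * (of_int u0 * x)" by auto
    thus "\<bar>u0\<bar> \<in> {u. 0 < u \<and> real_of_int u * x \<in> \<int>}" using u0 u0n by auto
  qed
  hence ne: "I \<noteq> {}" by auto
  obtain b where bI: "b \<in> I" and bmin: "\<And>w. w \<in> I \<Longrightarrow> b \<le> w"
  proof -
    have "\<exists>u. u \<in> I" using ne by auto
    then obtain u where "u \<in> I" by auto
    hence "nat u \<in> nat ` I" by auto
    hence "(LEAST k. k \<in> nat ` I) \<in> nat ` I" by (rule LeastI)
    then obtain v where v: "v \<in> I" "nat v = (LEAST k. k \<in> nat ` I)" by auto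
    have "\<forall>w\<in>I. v \<le> w"
    proof
      fix w assume "w \<in> I"
      hence "nat w \<in> nat ` I" by auto
      hence "nat v \<le> nat w" using v(2) by (simp add: Least_le)
      thus "v \<le> w" using v(1) \<open>w \<in> I\<close> unfolding I_def by auto
    qed
    thus ?thesis using that v(1) by blast
  qed
  have bdvd: "b dvd u" if "of_int u * x \<in> \<int>" for u :: int
  proof -
    have bpos: "b > 0" using bI unfolding I_def by auto
    define r where "r = u mod b"
    have "r = u - (u div b) * b" unfolding r_def by (simp add: minus_div_mult_eq_mod)
    hence eq: "real_of_int u = real_of_int r + real_of_int (u div b) * real_of_int b" by simp
    have "of_int r * x = of_int u * x - of_int (u div b) * (of_int b * x)" by (subst eq) (simp add: algebra_simps)
    moreover have "of_int b * x \<in> \<int>" using bI unfolding I_def by auto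
    ultimately have rI: "of_int r * x \<in> \<int>" using that by (simp add: Ints_diff Ints_mult)
    have "r \<ge> 0" "r < b" unfolding r_def using bpos by auto
    have "r = 0"
    proof (rule ccontr)
      assume "r \<noteq> 0" hence "r \<in> I" using rI \<open>r \<ge> 0\<close> unfolding I_def by auto
      hence "b \<le> r" by (rule bmin)
      thus False using \<open>r < b\<close> by simp
    qed
    thus ?thesis unfolding r_def by auto
  qed
  have "b = 1"
  proof (rule ccontr)
    assume "b \<noteq> 1"
    moreover have "b > 0" using bI unfolding I_def by auto
    ultimately have "nat b \<noteq> 1" by auto
    then obtain p where p: "prime p" "p dvd nat b" using prime_factor_nat by blast
    from assms[OF p(1)] obtain u :: int where u: "\<not> int p dvd u" "of_int u * x \<in> \<int>"
      unfolding locint_def by auto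
    have "b dvd u" using bdvd[OF u(2)] .
    moreover have "int p dvd b" using p(2) \<open>b > 0\<close>
      by (metis int_dvd_int_iff int_nat_eq order_less_imp_le)
    ultimately show False using u(1) dvd_trans by blast
  qed
  thus ?thesis using bI unfolding I_def by simp
qed


definition Pp :: "nat \<Rightarrow> nat \<Rightarrow> real fps \<Rightarrow> bool" where
  "Pp p d F \<longleftrightarrow> (\<forall>H. locint p (real d ^ H * F $ H))"

lemma Pp_Ints: "prime p \<Longrightarrow> (\<And>H. real d ^ H * F $ H \<in> \<int>) \<Longrightarrow> Pp p d F"
  unfolding Pp_def using locint_Ints by blast

lemma Pp_mult:
  assumes "prime p" "Pp p d F" "Pp p d G" shows "Pp p d (F * G)"
  unfolding Pp_def
proof
  fix H
  have "real d ^ H * (F * G) $ H = (\<Sum>i=0..H. (real d ^ i * F $ i) * (real d ^ (H - i) * G $ (H - i)))"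
    unfolding fps_mult_nth sum_distrib_left
  proof (rule sum.cong)
    fix i assume "i \<in> {0..H}"
    hence "real d ^ H = real d ^ i * real d ^ (H - i)" by (simp flip: power_add)
    thus "real d ^ H * (F $ i * G $ (H - i)) = real d ^ i * F $ i * (real d ^ (H - i) * G $ (H - i))"
      by simp
  qed simp
  also have "locint p \<dots>"
    apply (rule locint_sum[OF assms(1)])
    apply (rule locint_mult[OF assms(1)])
    using assms unfolding Pp_def by auto
  finally show "locint p (real d ^ H * (F * G) $ H)" .
qed

lemma Pp_one: "prime p \<Longrightarrow> Pp p d 1"
  by (rule Pp_Ints) (auto simp: fps_one_nth)

lemma Pp_prod:
  assumes "prime p" "\<And>k. k \<in> A \<Longrightarrow> Pp p d (f k)" shows "Pp p d (\<Prod>k\<in>A. f k)"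
  using assms(2)
proof (induction A rule: infinite_finite_induct)
  case (infinite A) thus ?case using Pp_one[OF assms(1)] by simp
next
  case empty thus ?case using Pp_one[OF assms(1)] by simp
next
  case (insert x F) thus ?case using Pp_mult[OF assms(1)] by simp
qed

lemma local_prod:
  fixes L :: "nat set" and s :: int
  assumes p: "prime p" and pe: "p ^ e dvd d" and w: "\<And>l. l \<in> L \<Longrightarrow> w l \<le> e \<and> p ^ w l dvd l"
    and fin: "finite L"
  shows "locint p (K * real p ^ (\<Sum>l\<in>L. w l)) \<Longrightarrow>
    Pp p d (fps_const K * (\<Prod>l\<in>L. fps_const (real l) + fps_const (of_int s) * fps_X))"
  using fin w
proof (induction L arbitrary: K rule: finite_induct)
  case empty
  thus ?case unfolding Pp_def
    using locint_Ints[OF p, of 0] by (auto simp: fps_one_nth)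
next
  case (insert a L K)
  define PP where "PP = (\<Prod>l\<in>L. fps_const (real l) + fps_const (of_int s) * fps_X :: real fps)"
  have wa: "w a \<le> e" "p ^ w a dvd a" using insert.prems(2) by auto
  obtain a' where a': "a = p ^ w a * a'" using wa(2) by blast
  obtain d' where d': "d = p ^ w a * d'"
    using wa(1) pe by (metis dvd_trans le_imp_power_dvd dvdE)
  have S: "(\<Sum>l\<in>insert a L. w l) = w a + (\<Sum>l\<in>L. w l)" using insert.hyps by simp
  have IH1: "Pp p d (fps_const (K * real a) * PP)"
    unfolding PP_def
  proof (rule insert.IH)
    have "K * real a * real p ^ (\<Sum>l\<in>L. w l) = (K * real p ^ (\<Sum>l\<in>insert a L. w l)) * real a'"
    proof -
      have ra: "real a = real p ^ w a * real a'" using a' by (metis of_nat_mult of_nat_power)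
      show ?thesis unfolding S by (simp add: ra power_add)
    qed
    also have "locint p \<dots>" by (rule locint_mult[OF p insert.prems(1)], rule locint_Ints[OF p]) auto
    finally show "locint p (K * real a * real p ^ (\<Sum>l\<in>L. w l))" .
  qed (use insert.prems in auto)
  have IH2: "Pp p d (fps_const (K * of_int s * real d) * PP)"
    unfolding PP_def
  proof (rule insert.IH)
    have "K * of_int s * real d * real p ^ (\<Sum>l\<in>L. w l) = (K * real p ^ (\<Sum>l\<in>insert a L. w l)) * (of_int s * real d')"
    proof -
      have rd: "real d = real p ^ w a * real d'" using d' by (metis of_nat_mult of_nat_power)
      show ?thesis unfolding S by (simp add: rd power_add)
    qed
    also have "locint p \<dots>" by (rule locint_mult[OF p insert.prems(1)], rule locint_Ints[OF p]) auto
    finally show "locint p (K * of_int s * real d * real p ^ (\<Sum>l\<in>L. w l))" .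
  qed (use insert.prems in auto)
  have eq: "fps_const K * (\<Prod>l\<in>insert a L. fps_const (real l) + fps_const (of_int s) * fps_X)
     = fps_const (K * real a) * PP + fps_X * (fps_const (K * of_int s) * PP)"
    unfolding PP_def using insert.hyps by (simp add: algebra_simps flip: fps_const_mult)
  show ?case unfolding Pp_def eq
  proof
    fix H
    show "locint p (real d ^ H * (fps_const (K * real a) * PP + fps_X * (fps_const (K * of_int s) * PP)) $ H)"
    proof (cases H)
      case 0 thus ?thesis using IH1 unfolding Pp_def by (metis (no_types) fps_X_mult_nth add_0_right fps_add_nth)
    next
      case (Suc H')
      have "real d ^ H * (fps_const (K * real a) * PP + fps_X * (fps_const (K * of_int s) * PP)) $ H
        = real d ^ H * (fps_const (K * real a) * PP) $ H + real d ^ H' * (fps_const (K * of_int s * real d) * PP) $ H'"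
        using Suc by (simp add: algebra_simps)
      also have "locint p \<dots>" using IH1 IH2 p unfolding Pp_def by (intro locint_add) auto
      finally show ?thesis .
    qed
  qed
qed




lemma FR:
  fixes A B c :: nat
  assumes p: "prime p" and A: "A > 0" and B: "B > 0"
    and le: "multiplicity p B \<le> multiplicity p A + c"
  shows "locint p (real A / real B * real p ^ c)"
proof -
  obtain A' where A': "A = p ^ multiplicity p A * A'" "\<not> p dvd A'"
    using multiplicity_decompose'[of A p] A p by (metis not_prime_unit bot_nat_0.not_eq_extremum)
  obtain B' where B': "B = p ^ multiplicity p B * B'" "\<not> p dvd B'"
    using multiplicity_decompose'[of B p] B p by (metis not_prime_unit bot_nat_0.not_eq_extremum)
  have B'0: "B' > 0" using B' B by (metis gr0I mult_0_right)
  have pp: "real p > 0" using p prime_gt_0_nat by auto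
  define k where "k = multiplicity p A + c - multiplicity p B"
  have "real B' * (real A / real B * real p ^ c) = real A' * real p ^ k"
  proof -
    have "real p ^ (multiplicity p A + c) = real p ^ k * real p ^ multiplicity p B"
      unfolding k_def using le by (simp flip: power_add)
    moreover have "real A = real p ^ multiplicity p A * real A'" using A'(1) by (metis of_nat_mult of_nat_power)
    moreover have "real B = real p ^ multiplicity p B * real B'" using B'(1) by (metis of_nat_mult of_nat_power)
    ultimately show ?thesis using B'0 pp by (simp add: field_simps power_add)
  qed
  moreover have "real A' * real p ^ k \<in> \<int>" by (metis Ints_of_nat of_nat_mult of_nat_power)
  moreover have "\<not> int p dvd int B'" using B'(2) by simp
  ultimately show ?thesis unfolding locint_def
    by (metis of_int_of_nat_eq)
qed

lemma Suc_div_ind: "(q::nat) > 0 \<Longrightarrow> Suc x div q = x div q + (if q dvd Suc x then 1 else 0)"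
  by (auto simp: div_Suc dvd_eq_mod_eq_0)

lemma count_mult:
  assumes "q > 0" "a \<le> b"
  shows "card {l \<in> {a<..b}. (q::nat) dvd l} = b div q - a div q"
  using assms(2)
proof (induction b rule: dec_induct)
  case base thus ?case by simp
next
  case (step b)
  have ab: "a \<le> b" using step(1) .
  have fin: "finite {l \<in> {a<..b}. q dvd l}" by simp
  have nin: "Suc b \<notin> {l \<in> {a<..b}. q dvd l}" by simp
  have le: "a div q \<le> b div q" using ab by (rule div_le_mono)
  show ?case
  proof (cases "q dvd Suc b")
    case True
    have "{l \<in> {a<..Suc b}. q dvd l} = insert (Suc b) {l \<in> {a<..b}. q dvd l}"
      using ab True by (auto simp: le_Suc_eq)
    hence "card {l \<in> {a<..Suc b}. q dvd l} = Suc (card {l \<in> {a<..b}. q dvd l})"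
      using fin nin by simp
    moreover have "Suc b div q = Suc (b div q)" using Suc_div_ind[OF assms(1), of b] True by simp
    ultimately show ?thesis using step(3) le by simp
  next
    case False
    have "{l \<in> {a<..Suc b}. q dvd l} = {l \<in> {a<..b}. q dvd l}"
      using ab False by (auto simp: le_Suc_eq)
    moreover have "Suc b div q = b div q" using Suc_div_ind[OF assms(1), of b] False by simp
    ultimately show ?thesis using step(3) by simp
  qed
qed

lemma mult_level:
  fixes p y T :: nat
  assumes p: "prime p" and y: "y > 0" and T: "multiplicity p y \<le> T"
  shows "min e (multiplicity p y) = (\<Sum>j\<in>{1..T}. if j \<le> e \<and> p ^ j dvd y then 1 else 0)"
proof -
  have nu: "\<not> is_unit p" using p by (metis not_prime_unit)
  have "{j\<in>{1..T}. j \<le> e \<and> p ^ j dvd y} = {1..min e (multiplicity p y)}"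
  proof (intro equalityI subsetI)
    fix j assume "j \<in> {j\<in>{1..T}. j \<le> e \<and> p ^ j dvd y}"
    hence "j \<ge> 1" "j \<le> e" "p ^ j dvd y" by auto
    moreover have "j \<le> multiplicity p y" using power_dvd_iff_le_multiplicity[of y p j] nu y \<open>p ^ j dvd y\<close> by simp
    ultimately show "j \<in> {1..min e (multiplicity p y)}" by simp
  next
    fix j assume "j \<in> {1..min e (multiplicity p y)}"
    hence "j \<ge> 1" "j \<le> e" "j \<le> multiplicity p y" by auto
    moreover have "p ^ j dvd y" using multiplicity_dvd' \<open>j \<le> multiplicity p y\<close> by blast
    ultimately show "j \<in> {j\<in>{1..T}. j \<le> e \<and> p ^ j dvd y}" using T by simp
  qed
  have "(\<Sum>j\<in>{1..T}. if j \<le> e \<and> p ^ j dvd y then 1 else 0) = (\<Sum>j\<in>{j\<in>{1..T}. j \<le> e \<and> p ^ j dvd y}. (1::nat))"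
    by (rule sum.inter_filter[symmetric]) simp
  also have "\<dots> = card {j\<in>{1..T}. j \<le> e \<and> p ^ j dvd y}" by simp
  finally show ?thesis using \<open>{j\<in>{1..T}. j \<le> e \<and> p ^ j dvd y} = {1..min e (multiplicity p y)}\<close> by simp
qed

lemma mult_bound:
  fixes p y :: nat
  assumes p: "prime p" and y: "y > 0"
  shows "multiplicity p y < y"
proof -
  have "p ^ multiplicity p y dvd y" by (rule multiplicity_dvd)
  hence "p ^ multiplicity p y \<le> y" using y by (simp add: dvd_imp_le)
  moreover have "multiplicity p y < 2 ^ multiplicity p y" by (rule less_exp)
  moreover have "2 ^ multiplicity p y \<le> p ^ multiplicity p y"
    using p by (simp add: power_mono prime_ge_2_nat)
  ultimately show ?thesis by linarith
qed

lemma legendre: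
  fixes p x T :: nat
  assumes p: "prime p" and xT: "x \<le> T"
  shows "multiplicity p (fact x) = (\<Sum>j\<in>{1..T}. x div p ^ j)"
  using xT
proof (induction x)
  case 0 thus ?case by (simp add: multiplicity_unit_left)
next
  case (Suc x)
  have "multiplicity p (fact (Suc x) :: nat) = multiplicity p (Suc x) + multiplicity p (fact x :: nat)"
    unfolding fact_Suc of_nat_id by (rule prime_elem_multiplicity_mult_distrib) (use p in auto)
  also have "multiplicity p (Suc x) = (\<Sum>j\<in>{1..T}. if j \<le> T \<and> p ^ j dvd Suc x then 1 else 0)"
    using mult_level[OF p, of "Suc x" T T] mult_bound[OF p, of "Suc x"] Suc.prems by simp
  also have "multiplicity p (fact x :: nat) = (\<Sum>j\<in>{1..T}. x div p ^ j)" using Suc by simp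
  also have "(\<Sum>j\<in>{1..T}. if j \<le> T \<and> p ^ j dvd Suc x then 1 else 0) + (\<Sum>j\<in>{1..T}. x div p ^ j)
     = (\<Sum>j\<in>{1..T}. Suc x div p ^ j)"
    unfolding sum.distrib[symmetric]
  proof (rule sum.cong[OF refl])
    fix j
    have "p ^ j > 0" using p prime_gt_0_nat by simp
    thus "(if j \<le> T \<and> p ^ j dvd Suc x then 1 else 0) + x div p ^ j = Suc x div p ^ j"
      if "j \<in> {1..T}" using that by (simp add: Suc_div_ind)
  qed
  finally show ?case .
qed

lemma wsum:
  fixes p T e :: nat and L :: "nat set"
  assumes p: "prime p" and fin: "finite L" and pos: "\<And>l. l \<in> L \<Longrightarrow> 0 < l \<and> l \<le> T"
  shows "(\<Sum>l\<in>L. min e (multiplicity p l)) = (\<Sum>j\<in>{1..T}. if j \<le> e then card {l\<in>L. p ^ j dvd l} else 0)"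
proof -
  have "(\<Sum>l\<in>L. min e (multiplicity p l)) = (\<Sum>l\<in>L. \<Sum>j\<in>{1..T}. if j \<le> e \<and> p ^ j dvd l then 1 else 0)"
  proof (rule sum.cong[OF refl])
    fix l assume l: "l \<in> L"
    have l0: "0 < l" "l \<le> T" using pos[OF l] by auto
    have "multiplicity p l < l" using mult_bound[OF p l0(1)] .
    hence "multiplicity p l \<le> T" using l0(2) by simp
    thus "min e (multiplicity p l) = (\<Sum>j\<in>{1..T}. if j \<le> e \<and> p ^ j dvd l then 1 else 0)"
      by (rule mult_level[OF p l0(1)])
  qed
  also have "\<dots> = (\<Sum>j\<in>{1..T}. \<Sum>l\<in>L. if j \<le> e \<and> p ^ j dvd l then 1 else 0)"
    by (rule sum.swap)
  also have "\<dots> = (\<Sum>j\<in>{1..T}. if j \<le> e then card {l\<in>L. p ^ j dvd l} else 0)"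
  proof (rule sum.cong[OF refl])
    fix j
    have "(\<Sum>l\<in>L. if j \<le> e \<and> p ^ j dvd l then 1 else 0) = (\<Sum>l\<in>{l\<in>L. j \<le> e \<and> p ^ j dvd l}. (1::nat))"
      by (rule sum.inter_filter[symmetric]) (rule fin)
    also have "\<dots> = (if j \<le> e then card {l\<in>L. p ^ j dvd l} else 0)" by simp
    finally show "(\<Sum>l\<in>L. if j \<le> e \<and> p ^ j dvd l then 1 else 0) = (if j \<le> e then card {l\<in>L. p ^ j dvd l} else 0)" .
  qed
  finally show ?thesis .
qed




lemma div_add_le: "(a::nat) div q + b div q \<le> (a + b) div q"
proof -
  have "(a + b) div q = a div q + b div q + (a mod q + b mod q) div q" by (rule div_add1_eq)
  thus ?thesis by linarith
qed

lemma mult_div_le: "(r::nat) * (n div q) \<le> (r * n) div q"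
proof (induction r)
  case 0 thus ?case by simp
next
  case (Suc r)
  have "Suc r * (n div q) = n div q + r * (n div q)" by simp
  also have "\<dots> \<le> n div q + (r * n) div q" using Suc by simp
  also have "\<dots> \<le> (n + r * n) div q" by (rule div_add_le)
  finally show ?case by simp
qed

lemma FRL:
  fixes A B T e :: nat and L :: "nat set" and \<alpha> \<beta> :: "nat \<Rightarrow> nat"
  assumes p: "prime p" and A: "A > 0" and B: "B > 0"
    and mA: "multiplicity p A = (\<Sum>j\<in>{1..T}. \<alpha> j)"
    and mB: "multiplicity p B = (\<Sum>j\<in>{1..T}. \<beta> j)"
    and fin: "finite L" and pos: "\<And>l. l \<in> L \<Longrightarrow> 0 < l \<and> l \<le> T"
    and lev: "\<And>j. j \<in> {1..T} \<Longrightarrow> \<beta> j \<le> \<alpha> j + (if j \<le> e then card {l\<in>L. p ^ j dvd l} else 0)"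
  shows "locint p (real A / real B * real p ^ (\<Sum>l\<in>L. min e (multiplicity p l)))"
proof (rule FR[OF p A B])
  have "multiplicity p B \<le> (\<Sum>j\<in>{1..T}. \<alpha> j + (if j \<le> e then card {l\<in>L. p ^ j dvd l} else 0))"
    unfolding mB by (rule sum_mono) (rule lev)
  also have "\<dots> = (\<Sum>j\<in>{1..T}. \<alpha> j) + (\<Sum>j\<in>{1..T}. (if j \<le> e then card {l\<in>L. p ^ j dvd l} else 0))"
    by (rule sum.distrib)
  also have "\<dots> = multiplicity p A + (\<Sum>l\<in>L. min e (multiplicity p l))"
    by (simp only: mA wsum[OF p fin pos, of e])
  finally show "multiplicity p B \<le> multiplicity p A + (\<Sum>l\<in>L. min e (multiplicity p l))" .
qed

lemma dlcm_facts:
  fixes n p :: nat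
  assumes p: "prime p"
  defines "e \<equiv> multiplicity p (dlcm n)"
  shows "dlcm n > 0" "p ^ e dvd dlcm n" "\<And>j. e < j \<Longrightarrow> n < p ^ j"
    "\<And>g. 0 < g \<Longrightarrow> g \<le> n \<Longrightarrow> g dvd dlcm n"
proof -
  show d0: "dlcm n > 0" unfolding dlcm_def
    by (metis Lcm_0_iff atLeastAtMost_iff finite_atLeastAtMost gr0I not_one_le_zero)
  show "p ^ e dvd dlcm n" unfolding e_def by (rule multiplicity_dvd)
  show gd: "\<And>g. 0 < g \<Longrightarrow> g \<le> n \<Longrightarrow> g dvd dlcm n" unfolding dlcm_def
    by (rule dvd_Lcm) simp
  fix j assume j: "e < j"
  show "n < p ^ j"
  proof (rule ccontr)
    assume "\<not> n < p ^ j"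
    hence pj: "p ^ j \<le> n" by simp
    have "0 < p ^ j" using p by (simp add: prime_gt_0_nat)
    hence "p ^ j dvd dlcm n" using gd pj by blast
    moreover have nu: "\<not> is_unit p" using p by (metis not_prime_unit)
    moreover have "dlcm n \<noteq> 0" using d0 by simp
    ultimately have "j \<le> e" unfolding e_def by (intro multiplicity_geI)
    thus False using j by simp
  qed
qed




lemma mult_fact_pow:
  assumes p: "prime p"
  shows "multiplicity p ((fact n :: nat) ^ r * fact m) = r * multiplicity p (fact n :: nat) + multiplicity p (fact m :: nat)"
proof -
  have "multiplicity p ((fact n :: nat) ^ r * fact m) = multiplicity p ((fact n :: nat) ^ r) + multiplicity p (fact m :: nat)"
    by (rule prime_elem_multiplicity_mult_distrib) (use p in auto)
  also have "multiplicity p ((fact n :: nat) ^ r) = r * multiplicity p (fact n :: nat)"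
    by (rule prime_elem_multiplicity_power_distrib) (use p in auto)
  finally show ?thesis .
qed

lemma R1_cond:
  fixes i j n r p :: nat
  assumes p: "prime p" and ij: "i \<le> n" "j \<le> n" "n \<le> r * n + j"
  shows "locint p (real (fact (r*n)) / real ((fact n :: nat) ^ r * fact (r * n + j - n))
            * real p ^ (\<Sum>l\<in>{n+i-j<..r*n+i}. min (multiplicity p (dlcm n)) (multiplicity p l)))"
proof -
  define e where "e = multiplicity p (dlcm n)"
  define m where "m = r * n + j - n"
  define T where "T = r * n + n + 2"
  have bigq: "\<And>k. e < k \<Longrightarrow> n < p ^ k" using dlcm_facts(3)[OF p] unfolding e_def by blast
  have qpos: "\<And>k. p ^ k > 0" using p by (simp add: prime_gt_0_nat)
  have mle: "m \<le> r * n" unfolding m_def using ij by simp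
  have sp: "r * n + i = (n + i - j) + m" unfolding m_def using ij by simp
  show ?thesis unfolding e_def[symmetric] m_def[symmetric]
  proof (rule FRL[OF p, where T = T and \<alpha> = "\<lambda>k. (r*n) div p ^ k" and \<beta> = "\<lambda>k. r * (n div p ^ k) + m div p ^ k"])
    show "multiplicity p (fact (r * n) :: nat) = (\<Sum>k\<in>{1..T}. r * n div p ^ k)"
      by (rule legendre[OF p]) (simp add: T_def)
    show "multiplicity p ((fact n :: nat) ^ r * fact m) = (\<Sum>k\<in>{1..T}. r * (n div p ^ k) + m div p ^ k)"
      unfolding mult_fact_pow[OF p] sum.distrib sum_distrib_left[symmetric]
      using legendre[OF p, of n T] legendre[OF p, of m T] mle by (simp add: T_def)
    show "\<And>l. l \<in> {n + i - j<..r * n + i} \<Longrightarrow> 0 < l \<and> l \<le> T" using ij by (auto simp: T_def)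
    fix k assume k: "k \<in> {1..T}"
    define q where "q = p ^ k"
    have q0: "q > 0" unfolding q_def by (rule qpos)
    have rn: "r * (n div q) \<le> (r * n) div q" by (rule mult_div_le)
    show "r * (n div p ^ k) + m div p ^ k \<le> r * n div p ^ k +
          (if k \<le> e then card {l \<in> {n + i - j<..r * n + i}. p ^ k dvd l} else 0)"
    proof (cases "k \<le> e")
      case True
      have c: "card {l \<in> {n + i - j<..r * n + i}. q dvd l} = (r * n + i) div q - (n + i - j) div q"
        by (rule count_mult[OF q0]) (use ij in simp)
      have "(n + i - j) div q + m div q \<le> (r * n + i) div q" unfolding sp by (rule div_add_le)
      thus ?thesis using True c rn by (simp add: q_def)
    next
      case False
      hence "n < q" unfolding q_def using bigq by simp
      hence "n div q = 0" by simp
      moreover have "m div q \<le> (r * n) div q" using mle by (rule div_le_mono)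
      ultimately show ?thesis using False rn by (simp add: q_def)
    qed
  qed (use p in \<open>auto simp: prime_gt_0_nat\<close>)
qed

lemma mult_fact3:
  assumes p: "prime p"
  shows "multiplicity p ((fact n :: nat) ^ r * fact a * fact b) = r * multiplicity p (fact n :: nat) + multiplicity p (fact a :: nat) + multiplicity p (fact b :: nat)"
proof -
  have "multiplicity p ((fact n :: nat) ^ r * fact a * fact b) = multiplicity p ((fact n :: nat) ^ r * fact a) + multiplicity p (fact b :: nat)"
    by (rule prime_elem_multiplicity_mult_distrib) (use p in auto)
  thus ?thesis using mult_fact_pow[OF p, of n r a] by simp
qed

lemma card_filter_Un:
  assumes "finite A" "finite B" "A \<inter> B = {}"
  shows "card {l \<in> A \<union> B. P l} = card {l \<in> A. P l} + card {l \<in> B. P l}"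
proof -
  have "{l \<in> A \<union> B. P l} = {l \<in> A. P l} \<union> {l \<in> B. P l}" by auto
  thus ?thesis using assms by (simp add: card_Un_disjoint disjoint_iff)
qed

lemma R2A_cond:
  fixes i j n r p :: nat
  assumes p: "prime p" and ij: "i \<le> j" "j \<le> n" "n \<le> r * n + j"
  shows "locint p (real (fact (r*n+j+1)) / real ((fact n :: nat) ^ r * fact (j - i) * fact (r*n+i+1))
            * real p ^ (\<Sum>l\<in>{n-i<..r*n+j-i} \<union> {r*n+j+1<..r*n+n+1}. min (multiplicity p (dlcm n)) (multiplicity p l)))"
proof -
  define e where "e = multiplicity p (dlcm n)"
  define M where "M = r * n"
  define T where "T = r * n + n + 2"
  have bigq: "\<And>k. e < k \<Longrightarrow> n < p ^ k" using dlcm_facts(3)[OF p] unfolding e_def by blast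
  have qpos: "\<And>k. p ^ k > 0" using p by (simp add: prime_gt_0_nat)
  have disj: "{n-i<..M+j-i} \<inter> {M+j+1<..M+n+1} = {}" by auto
  show ?thesis unfolding e_def[symmetric] M_def[symmetric]
  proof (rule FRL[OF p, where T = T and \<alpha> = "\<lambda>k. (M+j+1) div p ^ k"
        and \<beta> = "\<lambda>k. r * (n div p ^ k) + (j - i) div p ^ k + (M+i+1) div p ^ k"])
    show "multiplicity p (fact (M+j+1) :: nat) = (\<Sum>k\<in>{1..T}. (M+j+1) div p ^ k)"
      by (rule legendre[OF p]) (use ij in \<open>simp add: T_def M_def\<close>)
    show "multiplicity p ((fact n :: nat) ^ r * fact (j - i) * fact (M+i+1)) = (\<Sum>k\<in>{1..T}. r * (n div p ^ k) + (j - i) div p ^ k + (M+i+1) div p ^ k)"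
      unfolding mult_fact3[OF p] sum.distrib sum_distrib_left[symmetric]
      using legendre[OF p, of n T] legendre[OF p, of "j - i" T] legendre[OF p, of "M+i+1" T] ij
      by (simp add: T_def M_def)
    show "\<And>l. l \<in> {n-i<..M+j-i} \<union> {M+j+1<..M+n+1} \<Longrightarrow> 0 < l \<and> l \<le> T" using ij by (auto simp: T_def M_def)
    fix k assume k: "k \<in> {1..T}"
    define q where "q = p ^ k"
    have q0: "q > 0" unfolding q_def by (rule qpos)
    have rn: "r * (n div q) \<le> M div q" unfolding M_def by (rule mult_div_le)
    show "r * (n div p ^ k) + (j - i) div p ^ k + (M+i+1) div p ^ k \<le> (M+j+1) div p ^ k +
          (if k \<le> e then card {l \<in> {n-i<..M+j-i} \<union> {M+j+1<..M+n+1}. p ^ k dvd l} else 0)"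
    proof (cases "k \<le> e")
      case True
      have c: "card {l \<in> {n-i<..M+j-i} \<union> {M+j+1<..M+n+1}. q dvd l} = 
         ((M+j-i) div q - (n-i) div q) + ((M+n+1) div q - (M+j+1) div q)"
      proof -
        have c1: "card {l \<in> {n-i<..M+j-i}. q dvd l} = (M+j-i) div q - (n-i) div q"
          by (rule count_mult[OF q0]) (use ij in \<open>simp add: M_def\<close>)
        have c2: "card {l \<in> {M+j+1<..M+n+1}. q dvd l} = (M+n+1) div q - (M+j+1) div q"
          by (rule count_mult[OF q0]) (use ij in \<open>simp add: M_def\<close>)
        show ?thesis unfolding card_filter_Un[OF finite_greaterThanAtMost finite_greaterThanAtMost disj] c1 c2 ..
      qed
      have a1: "(M+i+1) div q + (n-i) div q \<le> (M+n+1) div q"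
        using div_add_le[of "M+i+1" q "n-i"] ij by simp
      have a2: "M div q + (j-i) div q \<le> (M+j-i) div q"
        using div_add_le[of M q "j-i"] ij by simp
      have a3: "(M+j+1) div q \<le> (M+n+1) div q" using ij by (simp add: div_le_mono)
      have a4: "(n-i) div q \<le> (M+j-i) div q" using ij by (simp add: div_le_mono M_def)
      have "r * (n div q) + (j - i) div q + (M+i+1) div q \<le> (M+j+1) div q +
          card {l \<in> {n-i<..M+j-i} \<union> {M+j+1<..M+n+1}. q dvd l}"
        unfolding c using rn a1 a2 a3 a4 by linarith
      thus ?thesis using True by (simp add: q_def)
    next
      case False
      hence "n < q" unfolding q_def using bigq by simp
      hence "n div q = 0" "(j - i) div q = 0" using ij by auto
      moreover have "(M+i+1) div q \<le> (M+j+1) div q" using ij by (simp add: div_le_mono)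
      ultimately show ?thesis using False by (simp add: q_def)
    qed
  qed (use p in \<open>auto simp: prime_gt_0_nat\<close>)
qed

lemma R2B_cond:
  fixes i j n p :: nat
  assumes p: "prime p" and ij: "i \<le> j" "j < n"
  shows "locint p (real 1 / real (fact (i+1) :: nat)
            * real p ^ (\<Sum>l\<in>{n-i<..n+1}. min (multiplicity p (dlcm n)) (multiplicity p l)))"
proof -
  define e where "e = multiplicity p (dlcm n)"
  define T where "T = n + 2"
  have bigq: "\<And>k. e < k \<Longrightarrow> n < p ^ k" using dlcm_facts(3)[OF p] unfolding e_def by blast
  have qpos: "\<And>k. p ^ k > 0" using p by (simp add: prime_gt_0_nat)
  show ?thesis unfolding e_def[symmetric]
  proof (rule FRL[OF p, where T = T and \<alpha> = "\<lambda>k. 0" and \<beta> = "\<lambda>k. (i+1) div p ^ k"])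
    show "multiplicity p (1::nat) = (\<Sum>k\<in>{1..T}. 0)" by simp
    show "multiplicity p (fact (i+1) :: nat) = (\<Sum>k\<in>{1..T}. (i+1) div p ^ k)"
      by (rule legendre[OF p]) (use ij in \<open>simp add: T_def\<close>)
    show "\<And>l. l \<in> {n-i<..n+1} \<Longrightarrow> 0 < l \<and> l \<le> T" using ij by (auto simp: T_def)
    fix k assume k: "k \<in> {1..T}"
    define q where "q = p ^ k"
    have q0: "q > 0" unfolding q_def by (rule qpos)
    show "(i+1) div p ^ k \<le> 0 + (if k \<le> e then card {l \<in> {n-i<..n+1}. p ^ k dvd l} else 0)"
    proof (cases "k \<le> e")
      case True
      have c: "card {l \<in> {n-i<..n+1}. q dvd l} = (n+1) div q - (n-i) div q"
        by (rule count_mult[OF q0]) (use ij in simp)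
      have a1: "(i+1) div q + (n-i) div q \<le> (n+1) div q"
        using div_add_le[of "i+1" q "n-i"] ij by simp
      show ?thesis using True c a1 by (simp add: q_def)
    next
      case False
      hence "n < q" unfolding q_def using bigq by simp
      hence "(i+1) div q = 0" using ij by auto
      thus ?thesis using False by (simp add: q_def)
    qed
  qed (use p in \<open>auto simp: prime_gt_0_nat\<close>)
qed




lemma prod_shift:
  fixes f :: "nat \<Rightarrow> real"
  shows "k \<le> a \<Longrightarrow> (\<Prod>i=0..<k. f (a - i)) = (\<Prod>l\<in>{a-k<..a}. f l)"
proof (induction k)
  case 0 thus ?case by simp
next
  case (Suc k)
  have e: "{a - Suc k<..a} = insert (a - k) {a-k<..a}" using Suc.prems by auto
  have "(\<Prod>i=0..<Suc k. f (a - i)) = (\<Prod>i=0..<k. f (a - i)) * f (a - k)" by simp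
  also have "\<dots> = (\<Prod>l\<in>{a-k<..a}. f l) * f (a - k)" using Suc by simp
  also have "\<dots> = (\<Prod>l\<in>{a - Suc k<..a}. f l)" unfolding e by (subst prod.insert) auto
  finally show ?case .
qed

lemma gchoose_prod:
  fixes x :: real
  assumes "k \<le> a"
  shows "(real a + x) gchoose k = (\<Prod>l\<in>{a-k<..a}. real l + x) / fact k"
proof -
  have "(real a + x) gchoose k = (\<Prod>i=0..<k. (real a + x) - of_nat i) / fact k"
    by (simp add: gbinomial_prod_rev)
  also have "(\<Prod>i=0..<k. (real a + x) - of_nat i) = (\<Prod>i=0..<k. real (a - i) + x)"
    by (rule prod.cong) (use assms in \<open>auto simp: of_nat_diff\<close>)
  also have "\<dots> = (\<Prod>l\<in>{a-k<..a}. real l + x)"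
    by (rule prod_shift[OF assms, where f = "\<lambda>l. real l + x"])
  finally show ?thesis .
qed

lemma prod_shift_up:
  fixes f :: "nat \<Rightarrow> real"
  shows "(\<Prod>i=0..<k. f (a + Suc i)) = (\<Prod>l\<in>{a<..a+k}. f l)"
proof (induction k)
  case 0 thus ?case by simp
next
  case (Suc k)
  have e: "{a<..a + Suc k} = insert (a + Suc k) {a<..a+k}" by auto
  have "(\<Prod>i=0..<Suc k. f (a + Suc i)) = (\<Prod>i=0..<k. f (a + Suc i)) * f (a + Suc k)" by simp
  also have "\<dots> = (\<Prod>l\<in>{a<..a+k}. f l) * f (a + Suc k)" using Suc by simp
  also have "\<dots> = (\<Prod>l\<in>{a<..a + Suc k}. f l)" unfolding e by (subst prod.insert) auto
  finally show ?case .
qed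

lemma poch_prod:
  fixes x :: real
  shows "pochhammer (1 - x) k = (\<Prod>l\<in>{0<..k}. real l - x)"
proof -
  have "pochhammer (1 - x) k = (\<Prod>i=0..<k. real (0 + Suc i) - x)"
    unfolding pochhammer_prod by (rule prod.cong) auto
  also have "\<dots> = (\<Prod>l\<in>{0<..0+k}. real l - x)" by (rule prod_shift_up)
  finally show ?thesis by simp
qed

lemma prod_split:
  fixes f :: "nat \<Rightarrow> real"
  assumes "a \<le> b" "b \<le> c"
  shows "(\<Prod>l\<in>{a<..c}. f l) = (\<Prod>l\<in>{a<..b}. f l) * (\<Prod>l\<in>{b<..c}. f l)"
proof -
  have "{a<..c} = {a<..b} \<union> {b<..c}" using assms by auto
  thus ?thesis by (simp add: prod.union_disjoint ivl_disj_int(4))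
qed

lemma fact_split:
  assumes "a \<le> b"
  shows "(fact b :: real) = fact a * (\<Prod>l\<in>{a<..b}. real l)"
  using assms
proof (induction b rule: dec_induct)
  case base thus ?case by simp
next
  case (step b)
  have e: "{a<..Suc b} = insert (Suc b) {a<..b}" using step(1) by auto
  show ?case unfolding e using step by (simp add: prod.insert algebra_simps)
qed

definition GF :: "real \<Rightarrow> real fps" where "GF g = Abs_fps (\<lambda>k. (1/g) ^ k)"

lemma GF_expansion:
  assumes g: "g \<noteq> 0"
  shows "(\<lambda>x. g / (g - x)) has_fps_expansion GF g"
proof -
  have "(\<lambda>x. inverse (1 - (1/g) * x)) has_fps_expansion inverse (1 - fps_const (1/g) * fps_X)"
    by (intro has_fps_expansion_inverse fps_expansion_intros) auto
  also have "inverse (1 - fps_const (1/g) * fps_X) = GF g"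
  proof (rule fps_inverse_unique, rule fps_ext)
    fix k
    show "((1 - fps_const (1/g) * fps_X) * GF g) $ k = (1 :: real fps) $ k"
      by (cases k) (auto simp: GF_def algebra_simps fps_one_nth)
  qed
  also have "(\<lambda>x. inverse (1 - (1/g) * x)) = (\<lambda>x. g / (g - x))"
  proof
    fix x :: real
    show "inverse (1 - (1/g) * x) = g / (g - x)"
    proof (cases "x = g")
      case True thus ?thesis using g by simp
    next
      case False thus ?thesis using g by (simp add: field_simps)
    qed
  qed
  finally show ?thesis .
qed

lemma prod_expansion:
  fixes L :: "nat set" and s :: int and K :: real
  shows "(\<lambda>x. K * (\<Prod>l\<in>L. real l + of_int s * x)) has_fps_expansion
     fps_const K * (\<Prod>l\<in>L. fps_const (real l) + fps_const (of_int s) * fps_X)"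
  by (intro fps_expansion_intros)




lemma R1_eq:
  assumes "n \<le> r * n + j" "i \<le> n" "j \<le> n"
  shows "R1 i j n r = (\<lambda>x. real (fact (r*n)) / real ((fact n :: nat) ^ r * fact (r * n + j - n))
           * (\<Prod>l\<in>{n+i-j<..r*n+i}. real l + of_int 1 * x))"
proof
  fix x :: real
  define m where "m = r * n + j - n"
  have im: "(int r - 1) * int n + int j = int m" unfolding m_def using assms(1)
    by (simp add: of_nat_diff algebra_simps)
  have mN: "m \<le> r * n + i" unfolding m_def using assms by simp
  have e: "r * n + i - m = n + i - j" unfolding m_def using assms by simp
  have "ibinom (real (r * n + i) + x) ((int r - 1) * int n + int j) = (real (r * n + i) + x) gchoose m"
    unfolding ibinom_def im by simp
  also have "\<dots> = (\<Prod>l\<in>{n+i-j<..r*n+i}. real l + x) / fact m"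
    using gchoose_prod[OF mN, of x] unfolding e .
  finally show "R1 i j n r x = real (fact (r*n)) / real ((fact n :: nat) ^ r * fact (r * n + j - n))
           * (\<Prod>l\<in>{n+i-j<..r*n+i}. real l + of_int 1 * x)"
    unfolding R1_def m_def[symmetric] by (simp add: of_nat_fact)
qed

lemma R1_zero:
  assumes "\<not> n \<le> r * n + j"
  shows "R1 i j n r = (\<lambda>x. 0)"
proof -
  have "(int r - 1) * int n + int j < 0"
  proof (cases r)
    case 0 thus ?thesis using assms by simp
  next
    case (Suc r') thus ?thesis using assms by simp
  qed
  thus ?thesis unfolding R1_def ibinom_def by auto
qed

lemma ibinom_nat: "ibinom y (int k) = y gchoose k"
  by (simp add: ibinom_def)

lemma prod_nz:
  fixes x :: real
  assumes "\<bar>x\<bar> < 1"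
  shows "(\<Prod>l\<in>{a<..b}. real l - x) \<noteq> 0"
proof -
  have "\<forall>l\<in>{a<..b}. real l - x \<noteq> 0"
  proof
    fix l assume "l \<in> {a<..b}"
    hence "real l \<ge> 1" by simp
    thus "real l - x \<noteq> 0" using assms by linarith
  qed
  thus ?thesis by simp
qed

lemma alg6:
  fixes a b c fM g F h A k :: real
  assumes "a \<noteq> 0" "b \<noteq> 0" "c \<noteq> 0" "fM \<noteq> 0"
  shows "fM / g * (a / fM) * (F / (a * b * c)) * (b / h) * (A / k) = F / (g * h * k) * A / c"
  using assms by (simp add: field_simps)

lemma R2_gen:
  fixes x :: real and i j n r :: nat
  assumes ij: "i \<le> j" "j \<le> n" and x: "\<bar>x\<bar> < 1"
  defines "M \<equiv> r * n"
  shows "R2 i j n r x = fact (M+j+1) / (fact n ^ r * fact (j-i) * fact (M+i+1))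
     * (\<Prod>l\<in>{n-i<..M+n+1}. real l - x) / (\<Prod>l\<in>{M+j-i<..M+j+1}. real l - x)"
proof -
  define P where "P a b = (\<Prod>l\<in>{a<..b}. real l - x)" for a b
  have Pnz: "P a b \<noteq> 0" for a b unfolding P_def by (rule prod_nz[OF x])
  have i1: "ibinom (real (r*n) - x + real_of_int (int j - int i)) (int j - int i) = P M (M+j-i) / fact (j-i)"
  proof -
    have e1: "int j - int i = int (j - i)" using ij by simp
    have e2: "real (r*n) - x + real_of_int (int (j - i)) = real (M + (j - i)) + (-x)"
      unfolding M_def by simp
    have "ibinom (real (r*n) - x + real_of_int (int j - int i)) (int j - int i) = (real (M + (j - i)) + (-x)) gchoose (j - i)"
      unfolding e1 e2 ibinom_nat ..
    also have "\<dots> = (\<Prod>l\<in>{M + (j - i) - (j - i)<..M + (j - i)}. real l + (-x)) / fact (j - i)"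
      by (rule gchoose_prod) simp
    finally show ?thesis unfolding P_def using ij by simp
  qed
  have i2: "ibinom (real ((r+1)*n) - x + 1) (int (r*n+i+1)) = P (n-i) (M+n+1) / fact (M+i+1)"
  proof -
    have e: "real ((r+1)*n) - x + 1 = real (M+n+1) + (-x)" by (simp add: M_def algebra_simps)
    have "ibinom (real ((r+1)*n) - x + 1) (int (r*n+i+1)) = (real (M+n+1) + (-x)) gchoose (M+i+1)"
      unfolding e ibinom_nat M_def ..
    also have "\<dots> = (\<Prod>l\<in>{M+n+1 - (M+i+1)<..M+n+1}. real l + (-x)) / fact (M+i+1)"
      by (rule gchoose_prod) (use ij in simp)
    also have "M+n+1 - (M+i+1) = n - i" using ij by simp
    finally show ?thesis unfolding P_def by simp
  qed
  have p1: "pochhammer (1 - x) M = P 0 M" unfolding P_def by (rule poch_prod)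
  have p2: "pochhammer (1 - x) (M+j+1) = P 0 M * P M (M+j-i) * P (M+j-i) (M+j+1)"
  proof -
    have a: "P 0 (M+j+1) = P 0 M * P M (M+j+1)" unfolding P_def by (rule prod_split) simp_all
    have b: "P M (M+j+1) = P M (M+j-i) * P (M+j-i) (M+j+1)" unfolding P_def by (rule prod_split) (use ij in simp_all)
    have "pochhammer (1 - x) (M+j+1) = P 0 (M+j+1)" unfolding P_def by (rule poch_prod)
    thus ?thesis unfolding a b by simp
  qed
  have "R2 i j n r x = fact M / fact n ^ r * (P 0 M / fact M)
     * (fact (M+j+1) / (P 0 M * P M (M+j-i) * P (M+j-i) (M+j+1)))
     * (P M (M+j-i) / fact (j-i)) * (P (n-i) (M+n+1) / fact (M+i+1))"
    unfolding R2_def unfolding i1 i2 unfolding M_def[symmetric] p1 p2 by simp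
  also have "\<dots> = fact (M+j+1) / (fact n ^ r * fact (j-i) * fact (M+i+1)) * P (n-i) (M+n+1) / P (M+j-i) (M+j+1)"
    by (rule alg6) (use Pnz in auto)
  finally show ?thesis unfolding P_def .
qed




lemma Pp_local:
  fixes L :: "nat set" and s :: int and n p :: nat
  assumes p: "prime p" and fin: "finite L" and pos: "\<And>l. l \<in> L \<Longrightarrow> 0 < l"
    and c: "locint p (K * real p ^ (\<Sum>l\<in>L. min (multiplicity p (dlcm n)) (multiplicity p l)))"
  shows "Pp p (dlcm n) (fps_const K * (\<Prod>l\<in>L. fps_const (real l) + fps_const (of_int s) * fps_X))"
proof (rule local_prod[OF p dlcm_facts(2)[OF p] _ fin c])
  fix l assume "l \<in> L"
  show "min (multiplicity p (dlcm n)) (multiplicity p l) \<le> multiplicity p (dlcm n) \<and>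
        p ^ min (multiplicity p (dlcm n)) (multiplicity p l) dvd l"
    by (auto intro: multiplicity_dvd')
qed

lemma glue_Pp:
  assumes "\<And>p. prime p \<Longrightarrow> Pp p d F"
  shows "real d ^ H * F $ H \<in> \<int>"
  by (rule locint_glue) (use assms in \<open>auto simp: Pp_def\<close>)

lemma GF_Pp:
  assumes p: "prime p" and g: "0 < g" "g dvd d"
  shows "Pp p d (GF (real g))"
proof (rule Pp_Ints[OF p])
  fix H
  obtain c where c: "d = g * c" using g(2) by blast
  have "real d ^ H * GF (real g) $ H = real c ^ H"
    unfolding GF_def using g(1) by (simp add: c power_divide field_simps)
  thus "real d ^ H * GF (real g) $ H \<in> \<int>" by simp
qed

lemma near0: "eventually (\<lambda>x::real. \<bar>x\<bar> < 1) (nhds 0)"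
proof -
  have "eventually (\<lambda>x::real. x \<in> ball 0 1) (nhds 0)"
    by (rule eventually_nhds_in_open) auto
  thus ?thesis by eventually_elim (simp add: dist_real_def)
qed

theorem part1:
  fixes i j n r H :: nat
  assumes "i \<le> n" "j \<le> n"
  shows "real (dlcm n) ^ H * ((deriv ^^ H) (R1 i j n r) 0 / fact H) \<in> \<int>"
proof (cases "n \<le> r * n + j")
  case True
  define K where "K = real (fact (r*n)) / real ((fact n :: nat) ^ r * fact (r * n + j - n))"
  define L where "L = {n+i-j<..r*n+i}"
  define F where "F = fps_const K * (\<Prod>l\<in>L. fps_const (real l) + fps_const (of_int 1) * fps_X)"
  have R1e: "R1 i j n r = (\<lambda>x. K * (\<Prod>l\<in>L. real l + of_int 1 * x))"
    unfolding K_def L_def by (rule R1_eq[OF True assms])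
  have "R1 i j n r has_fps_expansion F" unfolding F_def R1e by (rule prod_expansion)
  hence "(deriv ^^ H) (R1 i j n r) 0 / fact H = F $ H" by (rule fps_nth_fps_expansion_real)
  moreover have "real (dlcm n) ^ H * F $ H \<in> \<int>"
  proof (rule glue_Pp)
    fix p :: nat assume p: "prime p"
    show "Pp p (dlcm n) F" unfolding F_def
      by (rule Pp_local[OF p]) (use R1_cond[OF p assms True] in \<open>auto simp: K_def L_def\<close>)
  qed
  ultimately show ?thesis by simp
next
  case False
  have "R1 i j n r has_fps_expansion 0" unfolding R1_zero[OF False] by simp
  hence "(deriv ^^ H) (R1 i j n r) 0 / fact H = (0 :: real fps) $ H" by (rule fps_nth_fps_expansion_real)
  thus ?thesis by simp
qed

lemma alg_B:
  fixes a b c PA PG :: real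
  assumes "b \<noteq> 0" "PG \<noteq> 0"
  shows "(b * a) / (1 * b * c) * PA / PG = 1 / c * PA * (a / PG)"
  using assms by (simp add: field_simps)

theorem part2:
  fixes i j n r H :: nat
  assumes ij: "i \<le> j" "j \<le> n"
  shows "real (dlcm n) ^ H * ((deriv ^^ H) (R2 i j n r) 0 / fact H) \<in> \<int>"
proof (cases "n \<le> r * n + j")
  case True
  define M where "M = r * n"
  define K where "K = real (fact (r*n+j+1)) / real ((fact n :: nat) ^ r * fact (j - i) * fact (r*n+i+1))"
  define L1 where "L1 = {n-i<..r*n+j-i}"
  define L2 where "L2 = {r*n+j+1<..r*n+n+1}"
  define F where "F = fps_const K * (\<Prod>l\<in>L1 \<union> L2. fps_const (real l) + fps_const (of_int (-1)) * fps_X)"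
  have disj: "L1 \<inter> L2 = {}" unfolding L1_def L2_def by auto
  have ev: "eventually (\<lambda>x. K * (\<Prod>l\<in>L1 \<union> L2. real l + of_int (-1) * x) = R2 i j n r x) (nhds 0)"
    using near0
  proof eventually_elim
    case (elim x)
    define P where "P a b = (\<Prod>l\<in>{a<..b}. real l - x)" for a b
    have Pnz: "P a b \<noteq> 0" for a b unfolding P_def by (rule prod_nz[OF elim])
    have s1: "P (n-i) (M+n+1) = P (n-i) (M+j-i) * P (M+j-i) (M+n+1)"
      unfolding P_def by (rule prod_split) (use ij True in \<open>simp_all add: M_def\<close>)
    have s2: "P (M+j-i) (M+n+1) = P (M+j-i) (M+j+1) * P (M+j+1) (M+n+1)"
      unfolding P_def by (rule prod_split) (use ij True in \<open>simp_all add: M_def\<close>)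
    have u: "(\<Prod>l\<in>L1 \<union> L2. real l + of_int (-1) * x) = P (n-i) (M+j-i) * P (M+j+1) (M+n+1)"
      unfolding P_def L1_def L2_def M_def using disj[unfolded L1_def L2_def]
      by (simp add: prod.union_disjoint)
    have "R2 i j n r x = K * P (n-i) (M+n+1) / P (M+j-i) (M+j+1)"
      unfolding R2_gen[OF ij elim] K_def P_def M_def by (simp only: of_nat_fact of_nat_mult of_nat_power)
    also have "\<dots> = K * (P (n-i) (M+j-i) * P (M+j+1) (M+n+1))"
      unfolding s1 s2 using Pnz by simp
    finally show ?case unfolding u by simp
  qed
  have "(\<lambda>x. K * (\<Prod>l\<in>L1 \<union> L2. real l + of_int (-1) * x)) has_fps_expansion F"
    unfolding F_def by (rule prod_expansion)
  hence "R2 i j n r has_fps_expansion F" using ev by (rule has_fps_expansion_cong_ev)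
  hence "(deriv ^^ H) (R2 i j n r) 0 / fact H = F $ H" by (rule fps_nth_fps_expansion_real)
  moreover have "real (dlcm n) ^ H * F $ H \<in> \<int>"
  proof (rule glue_Pp)
    fix p :: nat assume p: "prime p"
    show "Pp p (dlcm n) F" unfolding F_def
      by (rule Pp_local[OF p]) (use R2A_cond[OF p ij True] in \<open>auto simp: K_def L1_def L2_def\<close>)
  qed
  ultimately show ?thesis by simp
next
  case False
  hence r0: "r = 0" and jn: "j < n" by (cases r; simp)+
  define K where "K = real 1 / real (fact (i+1) :: nat)"
  define L where "L = {n-i<..n+1}"
  define G where "G = {j-i<..j+1}"
  define F where "F = (fps_const K * (\<Prod>l\<in>L. fps_const (real l) + fps_const (of_int (-1)) * fps_X))
                      * (\<Prod>g\<in>G. GF (real g))"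
  have ev: "eventually (\<lambda>x. K * (\<Prod>l\<in>L. real l + of_int (-1) * x) * (\<Prod>g\<in>G. real g / (real g - x)) = R2 i j n r x) (nhds 0)"
    using near0
  proof eventually_elim
    case (elim x)
    define PA where "PA = (\<Prod>l\<in>L. real l - x)"
    define PG where "PG = (\<Prod>l\<in>G. real l - x)"
    have PGnz: "PG \<noteq> 0" unfolding PG_def G_def by (rule prod_nz[OF elim])
    have fs: "(fact (j+1) :: real) = fact (j-i) * (\<Prod>l\<in>G. real l)"
      unfolding G_def by (rule fact_split) simp
    have "R2 i j n r x = fact (j+1) / (1 * fact (j-i) * fact (i+1)) * PA / PG"
      using R2_gen[OF ij elim, of r] unfolding r0 PA_def PG_def L_def G_def using ij by (simp del: fact_Suc)
    also have "\<dots> = 1 / fact (i+1) * PA * ((\<Prod>l\<in>G. real l) / PG)"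
      unfolding fs by (rule alg_B) (simp_all add: PGnz)
    also have "1 / fact (i+1) = K" unfolding K_def by (simp only: of_nat_fact of_nat_1)
    also have "(\<Prod>l\<in>G. real l) / PG = (\<Prod>g\<in>G. real g / (real g - x))"
      unfolding PG_def by (rule prod_dividef[symmetric])
    finally show ?case unfolding PA_def by simp
  qed
  have "(\<lambda>x. K * (\<Prod>l\<in>L. real l + of_int (-1) * x) * (\<Prod>g\<in>G. real g / (real g - x))) has_fps_expansion F"
    unfolding F_def
    by (intro has_fps_expansion_mult prod_expansion has_fps_expansion_prod GF_expansion)
       (auto simp: G_def)
  hence "R2 i j n r has_fps_expansion F" using ev by (rule has_fps_expansion_cong_ev)
  hence "(deriv ^^ H) (R2 i j n r) 0 / fact H = F $ H" by (rule fps_nth_fps_expansion_real)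
  moreover have "real (dlcm n) ^ H * F $ H \<in> \<int>"
  proof (rule glue_Pp)
    fix p :: nat assume p: "prime p"
    show "Pp p (dlcm n) F" unfolding F_def
    proof (rule Pp_mult[OF p])
      show "Pp p (dlcm n) (fps_const K * (\<Prod>l\<in>L. fps_const (real l) + fps_const (of_int (-1)) * fps_X))"
        by (rule Pp_local[OF p]) (use R2B_cond[OF p ij(1) jn] in \<open>auto simp: K_def L_def\<close>)
      show "Pp p (dlcm n) (\<Prod>g\<in>G. GF (real g))"
      proof (rule Pp_prod[OF p])
        fix g assume "g \<in> G"
        hence g: "0 < g" "g \<le> n" unfolding G_def using jn by auto
        show "Pp p (dlcm n) (GF (real g))"
          by (rule GF_Pp[OF p g(1)]) (rule dlcm_facts(4)[OF p g])
      qed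
    qed
  qed
  ultimately show ?thesis by simp
qed



theorem mainTheorem16:
  fixes i j n r H :: nat
  shows "(i \<le> n \<and> j \<le> n \<longrightarrow>
            real (dlcm n) ^ H * ((deriv ^^ H) (R1 i j n r) 0 / fact H) \<in> \<int>)
       \<and> (i \<le> j \<and> j \<le> n \<longrightarrow>
            real (dlcm n) ^ H * ((deriv ^^ H) (R2 i j n r) 0 / fact H) \<in> \<int>)"
  using part1 part2 by blast

end
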